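(* Let $d\ge1$, let $\mathbf{e}_0=\mathbf{0}\in\mathbb{R}^d$ and $\mathbf{e}_1,\ldots,\mathbf{e}_d$ the standard unit basis vectors, let $\lambda\in[\frac{d}{d+1},1)$ and consider $S_i(\mathbf{x})=\lambda\mathbf{x}+(1-\lambda)\mathbf{e}_i$, $i=0,\ldots,d$, with attractor $X$. If $\mathbf{x}\in\mathrm{int}(X)$, then there exists a finite word $\mathbf{a}\in\mathcal{D}^*$ such that $T_{\mathbf{a}}(\mathbf{x})\in(0,1-\lambda]^d$.
   Context: $\mathcal{D}=\{0,\ldots,d\}$, $\mathcal{D}^*$ is the set of finite words over $\mathcal{D}$ (including the empty word). $X$ is the unique non-empty compact set with $X=\bigcup_{i=0}^dS_i(X)$. For $i\in\mathcal{D}$, $T_i(\mathbf{x})=\frac{\mathbf{x}-(1-\lambda)\mathbf{e}_i}{\lambda}$ is the inverse of $S_i$, and for $\mathbf{a}=a_1\cdots a_j\in\mathcal{D}^*$, $T_{\mathbf{a}}=T_{a_j}\circ\cdots\circ T_{a_1}$ (the identity for the empty word). *)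

theory Defs
  imports "HOL-Analysis.Analysis"
begin

text \<open>Digit set D = {0,...,d} is encoded as the type 'n option:
  None stands for digit 0 (e_0 = 0), Some j stands for the coordinate j
  (e_j the standard unit vector). Here d = CARD('n).\<close>

definition ebasis :: "'n::finite option \<Rightarrow> real^'n" where
  "ebasis i = (case i of None \<Rightarrow> 0 | Some j \<Rightarrow> axis j 1)"

definition Smap :: "real \<Rightarrow> 'n::finite option \<Rightarrow> real^'n \<Rightarrow> real^'n" where
  "Smap lam i x = lam *\<^sub>R x + (1 - lam) *\<^sub>R ebasis i"

definition Tmap :: "real \<Rightarrow> 'n::finite option \<Rightarrow> real^'n \<Rightarrow> real^'n" where
  "Tmap lam i x = (1 / lam) *\<^sub>R (x - (1 - lam) *\<^sub>R ebasis i)"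

text \<open>T_a for a = a_1 ... a_j is T_{a_j} o ... o T_{a_1}; fold applies a_1 first.\<close>
definition Tword :: "real \<Rightarrow> 'n::finite option list \<Rightarrow> real^'n \<Rightarrow> real^'n" where
  "Tword lam a x = fold (Tmap lam) a x"

end

theory Submission
  imports Defs
begin

lemma ebasis_nth: "ebasis i $ k = (case i of None \<Rightarrow> 0 | Some j \<Rightarrow> (if k = j then 1 else 0))"
  by (cases i) (auto simp: ebasis_def axis_def)

lemma ebasis_nonneg: "ebasis i $ k \<ge> 0"
  by (cases i) (auto simp: ebasis_nth)

lemma ebasis_sum: "(\<Sum>k\<in>UNIV. ebasis i $ k) \<le> 1"
  by (cases i) (auto simp: ebasis_nth)

lemma Tmap_nth: "Tmap lam (Some j) y $ k = (y $ k - (1 - lam) * (if k = j then 1 else 0)) / lam"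
  by (simp add: Tmap_def ebasis_nth)

lemma Tmap_sum: "(\<Sum>k\<in>UNIV. Tmap lam (Some j) y $ k) = ((\<Sum>k\<in>UNIV. y $ k) - (1 - lam)) / lam"
proof -
  have "(\<Sum>k\<in>UNIV. Tmap lam (Some j) y $ k) = (\<Sum>k\<in>UNIV. y $ k / lam - (1 - lam) / lam * (if k = j then 1 else 0))"
    by (rule sum.cong) (auto simp: Tmap_nth diff_divide_distrib)
  also have "\<dots> = (\<Sum>k\<in>UNIV. y $ k) / lam - (1 - lam) / lam"
    unfolding sum_subtractf sum_divide_distrib[symmetric] sum_distrib_left[symmetric] by simp
  finally show ?thesis by (simp add: diff_divide_distrib)
qed

lemma algo:
  fixes y :: "real^'n::finite"
  assumes lam: "0 < lam" "lam < 1" and s0: "s0 < 1"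
  shows "(\<forall>k. 0 < y $ k) \<and> (\<Sum>k\<in>UNIV. y $ k) \<le> s0 \<and>
         (\<Sum>k\<in>UNIV. y $ k) \<le> real n * ((1 - lam) * (1 - s0) / lam) \<longrightarrow>
         (\<exists>a. \<forall>j. 0 < Tword lam a y $ j \<and> Tword lam a y $ j \<le> 1 - lam)"
proof (induction n arbitrary: y)
  case 0
  show ?case
  proof
    assume h: "(\<forall>k. 0 < y $ k) \<and> (\<Sum>k\<in>UNIV. y $ k) \<le> s0 \<and>
         (\<Sum>k\<in>UNIV. y $ k) \<le> real 0 * ((1 - lam) * (1 - s0) / lam)"
    have "0 < (\<Sum>k\<in>UNIV. y $ k)"
      by (rule sum_pos) (use h in auto)
    with h show "\<exists>a. \<forall>j. 0 < Tword lam a y $ j \<and> Tword lam a y $ j \<le> 1 - lam" by simp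
  qed
next
  case (Suc n)
  show ?case
  proof
    assume h: "(\<forall>k. 0 < y $ k) \<and> (\<Sum>k\<in>UNIV. y $ k) \<le> s0 \<and>
         (\<Sum>k\<in>UNIV. y $ k) \<le> real (Suc n) * ((1 - lam) * (1 - s0) / lam)"
    show "\<exists>a. \<forall>j. 0 < Tword lam a y $ j \<and> Tword lam a y $ j \<le> 1 - lam"
    proof (cases "\<forall>j. y $ j \<le> 1 - lam")
      case True
      then show ?thesis using h by (intro exI[of _ "[]"]) (simp add: Tword_def)
    next
      case False
      then obtain j where j: "y $ j > 1 - lam" by (auto simp: not_le)
      define y' where "y' = Tmap lam (Some j) y"
      define s where "s = (\<Sum>k\<in>UNIV. y $ k)"
      have pos: "\<forall>k. 0 < y' $ k"
      proof
        fix k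
        show "0 < y' $ k" using h j lam
          by (cases "k = j") (auto simp: y'_def Tmap_nth)
      qed
      have s': "(\<Sum>k\<in>UNIV. y' $ k) = (s - (1 - lam)) / lam"
        by (simp add: y'_def Tmap_sum s_def)
      have ss0: "s \<le> s0" "s \<le> real (Suc n) * ((1 - lam) * (1 - s0) / lam)"
        using h by (auto simp: s_def)
      have e: "(s - (1 - lam)) / lam = s - (1 - lam) * (1 - s) / lam"
        using lam by (simp add: field_simps)
      have d: "(1 - lam) * (1 - s0) / lam \<le> (1 - lam) * (1 - s) / lam"
        using lam ss0 by (intro divide_right_mono mult_left_mono) auto
      have d0: "0 \<le> (1 - lam) * (1 - s) / lam"
        using lam ss0 s0 by auto
      have "(\<Sum>k\<in>UNIV. y' $ k) \<le> s0" using s' e d0 ss0 by linarith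
      moreover have "real (Suc n) * ((1 - lam) * (1 - s0) / lam) = real n * ((1 - lam) * (1 - s0) / lam) + (1 - lam) * (1 - s0) / lam"
        by (simp add: distrib_right add_divide_distrib)
      ultimately have "(\<Sum>k\<in>UNIV. y' $ k) \<le> s0 \<and> (\<Sum>k\<in>UNIV. y' $ k) \<le> real n * ((1 - lam) * (1 - s0) / lam)"
        using s' e d ss0 by linarith
      then obtain a where a: "\<forall>i. 0 < Tword lam a y' $ i \<and> Tword lam a y' $ i \<le> 1 - lam"
        using Suc.IH[of y'] pos by blast
      show ?thesis
        by (rule exI[of _ "Some j # a"]) (use a in \<open>simp add: Tword_def y'_def\<close>)
    qed
  qed
qed

theorem lemma4p5:
  fixes lam :: real and X :: "(real^'n::finite) set" and x :: "real^'n"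
  assumes "real CARD('n) / (real CARD('n) + 1) \<le> lam" and "lam < 1"
    and "X \<noteq> {}" and "compact X" and "X = (\<Union>i. Smap lam i ` X)"
    and "x \<in> interior X"
  shows "\<exists>a. \<forall>j. 0 < Tword lam a x $ j \<and> Tword lam a x $ j \<le> 1 - lam"
proof -
  have XU: "\<exists>i z. z \<in> X \<and> y = Smap lam i z" if "y \<in> X" for y
  proof -
    have "y \<in> (\<Union>i. Smap lam i ` X)" using that by (simp only: assms(5)[symmetric])
    then show ?thesis by blast
  qed
  have "real CARD('n) / (real CARD('n) + 1) > 0" by simp
  with assms(1) have lam0: "0 < lam" by linarith
  have nonneg: "\<forall>y\<in>X. 0 \<le> y $ j" for j
  proof -
    obtain y0 where y0: "y0 \<in> X" "\<forall>y\<in>X. y0 $ j \<le> y $ j"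
      using continuous_attains_inf[OF assms(4,3) continuous_on_component[OF continuous_on_id, of X j]]
      by blast
    from XU[OF y0(1)] obtain i z where z: "z \<in> X" "y0 = Smap lam i z" by blast
    have "y0 $ j = lam * z $ j + (1 - lam) * ebasis i $ j" by (simp add: z Smap_def)
    moreover have "lam * y0 $ j \<le> lam * z $ j"
      using y0(2) z(1) lam0 by (simp add: mult_left_mono)
    moreover have "0 \<le> (1 - lam) * ebasis i $ j"
      using assms(2) ebasis_nonneg[of i j] by simp
    ultimately have "0 \<le> (1 - lam) * y0 $ j" by (simp add: algebra_simps)
    then have "0 \<le> y0 $ j" using assms(2) by (simp add: zero_le_mult_iff)
    with y0 show ?thesis by force
  qed
  have sumle: "\<forall>y\<in>X. (\<Sum>k\<in>UNIV. y $ k) \<le> 1"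
  proof -
    obtain y0 where y0: "y0 \<in> X" "\<forall>y\<in>X. (\<Sum>k\<in>UNIV. y $ k) \<le> (\<Sum>k\<in>UNIV. y0 $ k)"
      using continuous_attains_sup[OF assms(4,3) continuous_on_sum[of UNIV X "\<lambda>k y. y $ k", OF continuous_on_component[OF continuous_on_id]]]
      by blast
    from XU[OF y0(1)] obtain i z where z: "z \<in> X" "y0 = Smap lam i z" by blast
    have "(\<Sum>k\<in>UNIV. y0 $ k) = lam * (\<Sum>k\<in>UNIV. z $ k) + (1 - lam) * (\<Sum>k\<in>UNIV. ebasis i $ k)"
      by (simp add: z Smap_def sum.distrib sum_distrib_left)
    also have "\<dots> \<le> lam * (\<Sum>k\<in>UNIV. y0 $ k) + (1 - lam) * 1"
      using y0(2) z(1) lam0 assms(2) ebasis_sum[of i]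
      by (intro add_mono mult_left_mono) auto
    finally have "(1 - lam) * (\<Sum>k\<in>UNIV. y0 $ k) \<le> (1 - lam) * 1"
      by (simp add: algebra_simps)
    then have "(\<Sum>k\<in>UNIV. y0 $ k) \<le> 1" using assms(2) by simp
    with y0 show ?thesis by force
  qed
  obtain e where e: "e > 0" "ball x e \<subseteq> X"
    using assms(6) by (meson mem_interior)
  obtain j0 :: 'n where True by blast
  have xpos: "0 < x $ k" for k
  proof -
    have "x - (e/2) *\<^sub>R axis k 1 \<in> ball x e" using e(1) by (simp add: dist_norm)
    then have "0 \<le> (x - (e/2) *\<^sub>R axis k 1) $ k" using nonneg e(2) by blast
    then show ?thesis using e(1) by simp
  qed
  have xsum: "(\<Sum>k\<in>UNIV. x $ k) \<le> 1 - e/2"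
  proof -
    have "x + (e/2) *\<^sub>R axis j0 1 \<in> ball x e" using e(1) by (simp add: dist_norm)
    then have "(\<Sum>k\<in>UNIV. (x + (e/2) *\<^sub>R axis j0 1) $ k) \<le> 1" using sumle e(2) by blast
    moreover have "(\<Sum>k\<in>UNIV. (x + (e/2) *\<^sub>R axis j0 1) $ k) = (\<Sum>k\<in>UNIV. x $ k) + e/2"
    proof -
      have "(\<Sum>k\<in>UNIV. (e/2) * axis j0 1 $ k) = (\<Sum>k\<in>UNIV. if k = j0 then e/2 else 0)"
        by (rule sum.cong) (auto simp: axis_def)
      also have "\<dots> = e/2" by simp
      finally show ?thesis by (simp add: sum.distrib)
    qed
    ultimately show ?thesis by simp
  qed
  define s0 where "s0 = 1 - e/2"
  have s0: "s0 < 1" using e(1) by (simp add: s0_def)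
  have dpos: "(1 - lam) * (1 - s0) / lam > 0" using lam0 assms(2) s0 by simp
  obtain n :: nat where n: "(\<Sum>k\<in>UNIV. x $ k) / ((1 - lam) * (1 - s0) / lam) \<le> real n"
    using real_arch_simple by blast
  then have "(\<Sum>k\<in>UNIV. x $ k) \<le> real n * ((1 - lam) * (1 - s0) / lam)"
    by (simp only: pos_divide_le_eq[OF dpos])
  then show ?thesis
    using algo[OF lam0 assms(2) s0, of x n] xpos xsum by (auto simp: s0_def)
qed

end
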